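(* Let $G$ be a connected graph with a fixed vertex $v_1$. Take a new vertex $z\notin V(G)$ and join it by a single edge to a vertex $u \in V(G)$ with $u \neq v_1$; denote the resulting graph by $G^+$. Then $\delta_{G^+}(z) = \delta_{G^+}(u)+1 = \delta_G(u)+1$.
   Context: All graphs are finite, simple, undirected. For a graph $H$ and vertex $x$, the transmission is $t_H(x)=\sum_{y\in V(H)}\mathrm{dist}_H(x,y)$. For a graph $H$ containing the fixed vertex $v_1$ and a vertex $x\neq v_1$ of $H$, define $\delta_H(x) = t_H(x) - t_{H-v_1}(x)$, where $H-v_1$ denotes $H$ with $v_1$ and its incident edges deleted. *)

theory Defs
  imports Complex_Main "HOL-Library.Extended_Real"
begin

definition simple_graph :: "'a set \<Rightarrow> ('a \<Rightarrow> 'a \<Rightarrow> bool) \<Rightarrow> bool" where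
  "simple_graph V E \<longleftrightarrow> finite V \<and> (\<forall>x y. E x y \<longrightarrow> x \<in> V \<and> y \<in> V)
     \<and> (\<forall>x y. E x y \<longrightarrow> E y x) \<and> (\<forall>x. \<not> E x x)"

definition is_walk :: "'a set \<Rightarrow> ('a \<Rightarrow> 'a \<Rightarrow> bool) \<Rightarrow> 'a list \<Rightarrow> bool" where
  "is_walk V E p \<longleftrightarrow> p \<noteq> [] \<and> set p \<subseteq> V \<and> (\<forall>i. Suc i < length p \<longrightarrow> E (p ! i) (p ! Suc i))"

definition gdist :: "'a set \<Rightarrow> ('a \<Rightarrow> 'a \<Rightarrow> bool) \<Rightarrow> 'a \<Rightarrow> 'a \<Rightarrow> enat" where
  "gdist V E x y = (if \<exists>p. is_walk V E p \<and> hd p = x \<and> last p = y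
      then enat (LEAST n. \<exists>p. is_walk V E p \<and> hd p = x \<and> last p = y \<and> length p = Suc n)
      else \<infinity>)"

definition connected_graph :: "'a set \<Rightarrow> ('a \<Rightarrow> 'a \<Rightarrow> bool) \<Rightarrow> bool" where
  "connected_graph V E \<longleftrightarrow> V \<noteq> {} \<and> (\<forall>x\<in>V. \<forall>y\<in>V. gdist V E x y \<noteq> \<infinity>)"

definition transmission :: "'a set \<Rightarrow> ('a \<Rightarrow> 'a \<Rightarrow> bool) \<Rightarrow> 'a \<Rightarrow> ereal" where
  "transmission V E x = (\<Sum>y\<in>V. ereal_of_enat (gdist V E x y))"

definition del_vert_V :: "'a set \<Rightarrow> 'a \<Rightarrow> 'a set" where
  "del_vert_V V v = V - {v}"
definition del_vert_E :: "('a \<Rightarrow> 'a \<Rightarrow> bool) \<Rightarrow> 'a \<Rightarrow> 'a \<Rightarrow> 'a \<Rightarrow> bool" where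
  "del_vert_E E v = (\<lambda>x y. E x y \<and> x \<noteq> v \<and> y \<noteq> v)"

definition delta :: "'a set \<Rightarrow> ('a \<Rightarrow> 'a \<Rightarrow> bool) \<Rightarrow> 'a \<Rightarrow> 'a \<Rightarrow> ereal" where
  "delta V E v1 x = transmission V E x - transmission (del_vert_V V v1) (del_vert_E E v1) x"

definition pend_E :: "('a \<Rightarrow> 'a \<Rightarrow> bool) \<Rightarrow> 'a \<Rightarrow> 'a \<Rightarrow> 'a \<Rightarrow> 'a \<Rightarrow> bool" where
  "pend_E E u z = (\<lambda>x y. E x y \<or> (x = u \<and> y = z) \<or> (x = z \<and> y = u))"

end

theory Submission
  imports Defs
begin

fun walk :: "'a set \<Rightarrow> ('a \<Rightarrow> 'a \<Rightarrow> bool) \<Rightarrow> 'a list \<Rightarrow> bool" where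
  "walk V E [] = False"
| "walk V E [x] = (x \<in> V)"
| "walk V E (x # y # p) = (x \<in> V \<and> E x y \<and> walk V E (y # p))"

lemma is_walk_iff: "is_walk V E p = walk V E p"
proof (induction V E p rule: walk.induct)
  case (1 V E)
  then show ?case by (simp add: is_walk_def)
next
  case (2 V E x)
  then show ?case by (simp add: is_walk_def)
next
  case (3 V E x y p)
  have "(\<forall>i. Suc i < length (x # y # p) \<longrightarrow> E ((x # y # p) ! i) ((x # y # p) ! Suc i))
     \<longleftrightarrow> E x y \<and> (\<forall>i. Suc i < length (y # p) \<longrightarrow> E ((y # p) ! i) ((y # p) ! Suc i))"
    (is "?A \<longleftrightarrow> ?B")
  proof
    assume ?A
    then show ?B
      by (metis Suc_less_eq length_Cons nth_Cons_Suc zero_less_Suc nth_Cons_0)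
  next
    assume ?B
    show ?A
    proof (intro allI impI)
      fix i assume "Suc i < length (x # y # p)"
      then show "E ((x # y # p) ! i) ((x # y # p) ! Suc i)"
        using \<open>?B\<close> by (cases i) auto
    qed
  qed
  then show ?case using 3 by (auto simp add: is_walk_def)
qed

lemma walk_Cons: "walk V E (x # q) \<longleftrightarrow> x \<in> V \<and> (q = [] \<or> (E x (hd q) \<and> walk V E q))"
  by (cases q) auto

lemma walk_nonempty: "walk V E p \<Longrightarrow> p \<noteq> []"
  by (cases p) auto

definition Wk :: "'a set \<Rightarrow> ('a \<Rightarrow> 'a \<Rightarrow> bool) \<Rightarrow> 'a \<Rightarrow> 'a \<Rightarrow> nat \<Rightarrow> bool" where
  "Wk V E x y n \<longleftrightarrow> (\<exists>p. walk V E p \<and> hd p = x \<and> last p = y \<and> length p = Suc n)"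

lemma gdist_Wk: "gdist V E x y = (if \<exists>n. Wk V E x y n then enat (LEAST n. Wk V E x y n) else \<infinity>)"
proof -
  have "(\<exists>p. is_walk V E p \<and> hd p = x \<and> last p = y) \<longleftrightarrow> (\<exists>n. Wk V E x y n)"
    unfolding Wk_def is_walk_iff
    by (metis walk_nonempty length_greater_0_conv gr0_conv_Suc)
  then show ?thesis unfolding gdist_def Wk_def is_walk_iff by simp
qed

lemma least_shift:
  fixes P Q :: "nat \<Rightarrow> bool"
  assumes A: "\<And>n. P n \<Longrightarrow> \<exists>m. Q m \<and> m + k \<le> n" and B: "\<And>m. Q m \<Longrightarrow> P (m + k)"
  shows "(if \<exists>n. P n then enat (LEAST n. P n) else \<infinity>)
       = (if \<exists>n. Q n then enat (LEAST n. Q n) else \<infinity>) + enat k"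
proof (cases "\<exists>n. Q n")
  case True
  then obtain q where q: "Q q" by blast
  have PE: "\<exists>n. P n" using B q by blast
  have "P (Least Q + k)" using B LeastI[of Q q] q by blast
  then have 1: "(LEAST n. P n) \<le> Least Q + k" by (rule Least_le)
  obtain m where m: "Q m" "m + k \<le> (LEAST n. P n)" using A LeastI_ex[OF PE] by blast
  have "Least Q \<le> m" using m(1) by (rule Least_le)
  then have "(LEAST n. P n) = Least Q + k" using 1 m by linarith
  then show ?thesis using True PE by simp
next
  case False
  then have "\<not> (\<exists>n. P n)" using A by blast
  then show ?thesis using False by simp
qed

lemma eoe1: "ereal_of_enat 1 = 1" by (simp add: one_enat_def one_ereal_def)

lemma sum_one_ereal: "(\<Sum>y\<in>A. (1::ereal)) = ereal (real (card A))"
proof -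
  have "(\<Sum>y\<in>A. (1::ereal)) = (\<Sum>y\<in>A. ereal 1)" by (simp add: one_ereal_def)
  also have "\<dots> = ereal (\<Sum>y\<in>A. 1)" by (rule sum_ereal)
  finally show ?thesis by simp
qed

locale pend =
  fixes V :: "'a set" and E :: "'a \<Rightarrow> 'a \<Rightarrow> bool" and u z :: 'a
  assumes Ein: "\<And>x y. E x y \<Longrightarrow> x \<in> V \<and> y \<in> V"
    and uV: "u \<in> V" and zV: "z \<notin> V"
begin

abbreviation "V' \<equiv> insert z V"
abbreviation "E' \<equiv> pend_E E u z"

lemma uz: "u \<noteq> z" using uV zV by auto

lemma L1: "walk V E p \<Longrightarrow> walk V' E' p"
  by (induction V E p rule: walk.induct) (auto simp: pend_E_def)

lemma L2: "walk V' E' p \<Longrightarrow> hd p \<noteq> z \<Longrightarrow> last p \<noteq> z \<Longrightarrow>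
   \<exists>q. walk V E q \<and> hd q = hd p \<and> last q = last p \<and> length q \<le> length p"
proof (induction p rule: length_induct)
  case (1 p)
  obtain x q where p: "p = x # q" using walk_nonempty[OF "1.prems"(1)] by (cases p) auto
  show ?case
  proof (cases q)
    case Nil
    then show ?thesis using 1 p by (intro exI[of _ "[x]"]) auto
  next
    case (Cons w r)
    have xw: "E' x w" and ww: "walk V' E' (w # r)" using "1.prems"(1) p Cons by auto
    have xz: "x \<noteq> z" using "1.prems"(2) p by simp
    show ?thesis
    proof (cases "w = z")
      case True
      have xu: "x = u" using xw True xz Ein zV by (auto simp: pend_E_def)
      have rne: "r \<noteq> []" using "1.prems"(3) p Cons True by auto
      then obtain w' r' where r: "r = w' # r'" by (cases r) auto
      have "E' z w'" using ww r True by simp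
      then have w'u: "w' = u" using Ein zV uz by (auto simp: pend_E_def)
      have wr: "walk V' E' r" using ww r by simp
      have "length r < length p" using p Cons by simp
      moreover have "hd r \<noteq> z" using r w'u uz by simp
      moreover have "last r \<noteq> z" using "1.prems"(3) p Cons rne by simp
      ultimately obtain q' where q': "walk V E q'" "hd q' = hd r" "last q' = last r" "length q' \<le> length r"
        using "1.IH" wr by blast
      show ?thesis
        by (intro exI[of _ q']) (use q' p Cons r w'u xu rne in auto)
    next
      case False
      have Exw: "E x w" using xw False xz by (auto simp: pend_E_def)
      have "length (w # r) < length p" using p Cons by simp
      moreover have "last (w # r) \<noteq> z" using "1.prems"(3) p Cons by simp
      ultimately obtain q' where q': "walk V E q'" "hd q' = w" "last q' = last (w # r)" "length q' \<le> length (w # r)"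
        using "1.IH" ww False by fastforce
      have "walk V E (x # q')" using q' Exw Ein walk_nonempty[OF q'(1)] by (simp add: walk_Cons)
      then show ?thesis
        by (intro exI[of _ "x # q'"]) (use q' p Cons walk_nonempty[OF q'(1)] in auto)
    qed
  qed
qed

lemma D1:
  assumes "x \<noteq> z" "y \<noteq> z"
  shows "gdist V' E' x y = gdist V E x y"
proof -
  have "(if \<exists>n. Wk V' E' x y n then enat (LEAST n. Wk V' E' x y n) else \<infinity>)
      = (if \<exists>n. Wk V E x y n then enat (LEAST n. Wk V E x y n) else \<infinity>) + enat 0"
  proof (rule least_shift)
    fix n assume "Wk V' E' x y n"
    then obtain p where p: "walk V' E' p" "hd p = x" "last p = y" "length p = Suc n"
      unfolding Wk_def by blast
    obtain q where q: "walk V E q" "hd q = x" "last q = y" "length q \<le> Suc n"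
      using L2[OF p(1)] p assms by auto
    obtain m where "length q = Suc m" using walk_nonempty[OF q(1)] by (cases q) auto
    then show "\<exists>m. Wk V E x y m \<and> m + 0 \<le> n" using q unfolding Wk_def by auto
  next
    fix m assume "Wk V E x y m"
    then show "Wk V' E' x y (m + 0)" unfolding Wk_def using L1 by auto
  qed
  then show ?thesis by (simp add: gdist_Wk zero_enat_def[symmetric])
qed

lemma D2:
  assumes "y \<noteq> z"
  shows "gdist V' E' z y = gdist V E u y + 1"
proof -
  have "(if \<exists>n. Wk V' E' z y n then enat (LEAST n. Wk V' E' z y n) else \<infinity>)
      = (if \<exists>n. Wk V E u y n then enat (LEAST n. Wk V E u y n) else \<infinity>) + enat 1"
  proof (rule least_shift)
    fix n assume "Wk V' E' z y n"
    then obtain p where p: "walk V' E' p" "hd p = z" "last p = y" "length p = Suc n"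
      unfolding Wk_def by blast
    obtain r where pr: "p = z # r" using p walk_nonempty[OF p(1)] by (cases p) auto
    have rne: "r \<noteq> []" using pr p assms by auto
    then obtain w r' where r: "r = w # r'" by (cases r) auto
    have "E' z w" using p(1) pr r by simp
    then have wu: "w = u" using Ein zV uz by (auto simp: pend_E_def)
    have wr: "walk V' E' r" using p(1) pr r by simp
    obtain q where q: "walk V E q" "hd q = u" "last q = y" "length q \<le> length r"
      using L2[OF wr] r wu uz p pr rne assms by auto
    obtain m where "length q = Suc m" using walk_nonempty[OF q(1)] by (cases q) auto
    then show "\<exists>m. Wk V E u y m \<and> m + 1 \<le> n" using q p pr unfolding Wk_def by auto
  next
    fix m assume "Wk V E u y m"
    then obtain q where q: "walk V E q" "hd q = u" "last q = y" "length q = Suc m"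
      unfolding Wk_def by blast
    have "walk V' E' (z # q)" using L1[OF q(1)] q(2) walk_nonempty[OF q(1)]
      by (simp add: walk_Cons pend_E_def)
    then show "Wk V' E' z y (m + 1)" unfolding Wk_def using q walk_nonempty[OF q(1)] by auto
  qed
  then show ?thesis unfolding gdist_Wk by (simp add: one_enat_def)
qed

lemma D3: "gdist V' E' z z = 0"
proof -
  have "Wk V' E' z z 0" unfolding Wk_def by (intro exI[of _ "[z]"]) auto
  then show ?thesis unfolding gdist_Wk by (auto simp: zero_enat_def)
qed

lemma D4: "gdist V' E' u z = 1"
proof -
  have w1: "Wk V' E' u z 1" unfolding Wk_def using uV
    by (intro exI[of _ "[u, z]"]) (auto simp: pend_E_def)
  have "\<not> Wk V' E' u z 0" unfolding Wk_def using uz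
    by (auto simp: length_Suc_conv)
  then have "(LEAST n. Wk V' E' u z n) = 1"
    using w1 by (intro Least_equality) (auto, metis One_nat_def Suc_leI gr0I)
  then show ?thesis unfolding gdist_Wk using w1 by (auto simp: one_enat_def)
qed


lemma T_u: assumes "finite V"
  shows "transmission V' E' u = 1 + (\<Sum>y\<in>V. ereal_of_enat (gdist V E u y))"
proof -
  have "transmission V' E' u = ereal_of_enat (gdist V' E' u z) + (\<Sum>y\<in>V. ereal_of_enat (gdist V' E' u y))"
    unfolding transmission_def using assms zV by simp
  also have "(\<Sum>y\<in>V. ereal_of_enat (gdist V' E' u y)) = (\<Sum>y\<in>V. ereal_of_enat (gdist V E u y))"
    by (rule sum.cong[OF refl]) (metis D1 uz zV)
  finally show ?thesis using D4 by (simp add: eoe1)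
qed

lemma T_z: assumes "finite V"
  shows "transmission V' E' z = (\<Sum>y\<in>V. ereal_of_enat (gdist V E u y)) + ereal (real (card V))"
proof -
  have "transmission V' E' z = ereal_of_enat (gdist V' E' z z) + (\<Sum>y\<in>V. ereal_of_enat (gdist V' E' z y))"
    unfolding transmission_def using assms zV by simp
  also have "(\<Sum>y\<in>V. ereal_of_enat (gdist V' E' z y)) = (\<Sum>y\<in>V. ereal_of_enat (gdist V E u y) + 1)"
    proof (rule sum.cong[OF refl])
    fix y assume "y \<in> V"
    then have "y \<noteq> z" using zV by auto
    then show "ereal_of_enat (gdist V' E' z y) = ereal_of_enat (gdist V E u y) + 1"
      using D2 by (simp add: ereal_of_enat_add eoe1)
  qed
  also have "\<dots> = (\<Sum>y\<in>V. ereal_of_enat (gdist V E u y)) + ereal (real (card V))"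
    by (simp add: sum.distrib sum_one_ereal)
  finally show ?thesis using D3 by simp
qed
end

theorem lemma1:
  fixes V :: "'a set" and E :: "'a \<Rightarrow> 'a \<Rightarrow> bool" and v1 u z :: 'a
  assumes "simple_graph V E" and "connected_graph V E" and "v1 \<in> V"
    and "z \<notin> V" and "u \<in> V" and "u \<noteq> v1"
  shows "delta (insert z V) (pend_E E u z) v1 z = delta (insert z V) (pend_E E u z) v1 u + 1
       \<and> delta (insert z V) (pend_E E u z) v1 u + 1 = delta V E v1 u + 1"
proof -
  have fin: "finite V" and Ein: "\<And>x y. E x y \<Longrightarrow> x \<in> V \<and> y \<in> V"
    using assms(1) unfolding simple_graph_def by auto
  interpret G: pend V E u z using Ein assms by unfold_locales auto
  let ?V1 = "V - {v1}" and ?E1 = "del_vert_E E v1"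
  interpret H: pend ?V1 ?E1 u z using Ein assms by unfold_locales (auto simp: del_vert_E_def)
  have zv1: "z \<noteq> v1" using assms by auto
  have hV: "del_vert_V (insert z V) v1 = insert z ?V1" using zv1 by (auto simp: del_vert_V_def)
  have hE: "del_vert_E (pend_E E u z) v1 = pend_E ?E1 u z"
    using zv1 assms(6) by (auto simp: del_vert_E_def pend_E_def fun_eq_iff)
  define A where "A = (\<Sum>y\<in>V. ereal_of_enat (gdist V E u y))"
  define B where "B = (\<Sum>y\<in>?V1. ereal_of_enat (gdist ?V1 ?E1 u y))"
  have tG: "transmission V E u = A" unfolding A_def transmission_def by simp
  have tH: "transmission (del_vert_V V v1) (del_vert_E E v1) u = B"
    unfolding B_def transmission_def del_vert_V_def by simp
  have Afin: "A \<noteq> \<infinity>" unfolding A_def using fin assms(2,5)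
    by (subst sum_Pinfty) (auto simp: connected_graph_def)
  have Ang: "A \<ge> 0" unfolding A_def by (rule sum_nonneg) (simp add: ereal_of_enat_nonneg)
  have Bng: "B \<ge> 0" unfolding B_def by (rule sum_nonneg) (simp add: ereal_of_enat_nonneg)
  obtain a where a: "A = ereal a" using Afin Ang by (cases A) auto
  have cV: "card ?V1 = card V - 1" "card V \<ge> 1" using fin assms(3)
    by (auto simp: Suc_le_eq card_gt_0_iff)
  have dz: "delta (insert z V) (pend_E E u z) v1 z = (A + ereal (real (card V))) - (B + ereal (real (card ?V1)))"
    unfolding delta_def hV hE using G.T_z[OF fin] H.T_z fin A_def B_def by simp
  have du: "delta (insert z V) (pend_E E u z) v1 u = (1 + A) - (1 + B)"
    unfolding delta_def hV hE using G.T_u[OF fin] H.T_u fin A_def B_def by simp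
  have dG: "delta V E v1 u = A - B" unfolding delta_def tG tH ..
  show ?thesis
  proof (cases B)
    case (real b)
    have "real (card V) = real (card ?V1) + 1" using cV by simp
    then show ?thesis unfolding dz du dG using a real by simp
  next
    case PInf
    then show ?thesis unfolding dz du dG using a by simp
  next
    case MInf
    then show ?thesis using Bng by simp
  qed
qed

end
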